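(* Let $n\ge 3$, $B\ge 1$, $G\ge B$, and let the labels $y_1,\dots,y_n\in[-G,G]$ be generated by an (possibly adaptive) adversary. Let $x_1,\dots,x_n$ be the predictions of FLH-OGD (defined in the context) with learning rate $\zeta=1/(2(G+B)^2)$. Then there exist a constant $c>0$ depending only on $G,B$ and an absolute constant $p\ge 0$ such that for every $C_n\ge 0$ and every comparator sequence $(w_1,\dots,w_n)\in\mathcal{TV}^B(C_n)$, $$\sum_{t=1}^n (y_t-x_t)^2-(y_t-w_t)^2\;\le\; c\,(\log n)^p\,\max\{n^{1/3}C_n^{2/3},\,1\}.$$ (The paper writes this as $\tilde O(n^{1/3}C_n^{2/3}\vee 1)$, with $\tilde O$ hiding logarithmic factors of $n,G,B$.) The algorithm does not need $C_n$ as input.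
   Context: Squared loss game: for $t=1,\dots,n$ the learner predicts $x_t\in[-B,B]$, then the adversary reveals $y_t\in[-G,G]$ and the learner suffers $(y_t-x_t)^2$. For integers $a\le b$ write $[a,b]=\{a,\dots,b\}$ and $[n]=[1,n]$. $\mathcal{TV}^B(C_n)=\{w_{1:n}: \sum_{t=2}^n|w_t-w_{t-1}|\le C_n,\ |w_t|\le B\ \forall t\}$. FLH-OGD: For each $j\in[n]$ a base learner $E^j$ is started at time $j$; it runs projected online gradient descent on $[-B,B]$ on the losses $x\mapsto (y_t-x)^2$, $t\ge j$: its first prediction $x^{(j)}_j$ is a fixed point of $[-B,B]$, and $x^{(j)}_{t+1}=\Pi\big(x^{(j)}_t-\tfrac{1}{2\tau}\cdot 2(x^{(j)}_t-y_t)\big)$ with $\tau=t-j+1$, where $\Pi$ is the projection onto $[-B,B]$. The FLH meta-algorithm with learning rate $\zeta$ keeps a probability vector $v_t=(v_t^{(1)},\dots,v_t^{(t)})$, $v_1=(1)$; at time $t$ it predicts $x_t=\sum_{j\le t}v_t^{(j)}x^{(j)}_t$; after $y_t$ is revealed it sets $\hat v^{(i)}_{t+1}=v_t^{(i)}e^{-\zeta(y_t-x_t^{(i)})^2}/\sum_{j\le t}v_t^{(j)}e^{-\zeta(y_t-x_t^{(j)})^2}$ for $i\le t$, then $v^{(t+1)}_{t+1}=1/(t+1)$ and $v^{(i)}_{t+1}=(1-\tfrac1{t+1})\hat v^{(i)}_{t+1}$ for $i\le t$. FLH-OGD is FLH with learning rate $\zeta=1/(2(G+B)^2)$ and these OGD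 base learners. *)

theory Defs
  imports "HOL-Analysis.Analysis"
begin

definition clip :: "real \<Rightarrow> real \<Rightarrow> real" where
  "clip B x = max (- B) (min B x)"

(* Base learner E^j (projected OGD started at time j with first prediction x0).
   ogd B x0 y j k is its prediction at time t = j + k; step size 1/(2 tau), tau = k+1 = t-j+1. *)
primrec ogd :: "real \<Rightarrow> real \<Rightarrow> (nat \<Rightarrow> real) \<Rightarrow> nat \<Rightarrow> nat \<Rightarrow> real" where
  "ogd B x0 y j 0 = x0"
| "ogd B x0 y j (Suc k) =
     clip B (ogd B x0 y j k - (1 / (2 * real (k + 1))) * (2 * (ogd B x0 y j k - y (j + k))))"

definition base_pred :: "real \<Rightarrow> real \<Rightarrow> (nat \<Rightarrow> real) \<Rightarrow> nat \<Rightarrow> nat \<Rightarrow> real" where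
  "base_pred B x0 y j t = ogd B x0 y j (t - j)"

(* FLH weight vector v_t (indices 1..t), learning rate zeta; time index starts at 1 *)
fun flh_v :: "real \<Rightarrow> real \<Rightarrow> real \<Rightarrow> (nat \<Rightarrow> real) \<Rightarrow> nat \<Rightarrow> nat \<Rightarrow> real" where
  "flh_v zeta B x0 y 0 = (\<lambda>i. 0)"
| "flh_v zeta B x0 y (Suc 0) = (\<lambda>i. if i = 1 then 1 else 0)"
| "flh_v zeta B x0 y (Suc (Suc s)) =
     (let t = Suc s;
          v = flh_v zeta B x0 y t;
          Z = (\<Sum>j = 1..t. v j * exp (- zeta * (y t - base_pred B x0 y j t)\<^sup>2))
      in (\<lambda>i. if 1 \<le> i \<and> i \<le> t
               then (1 - 1 / real (t + 1)) * (v i * exp (- zeta * (y t - base_pred B x0 y i t)\<^sup>2) / Z)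
               else if i = t + 1 then 1 / real (t + 1) else 0))"

definition flh_pred :: "real \<Rightarrow> real \<Rightarrow> real \<Rightarrow> (nat \<Rightarrow> real) \<Rightarrow> nat \<Rightarrow> real" where
  "flh_pred zeta B x0 y t = (\<Sum>j = 1..t. flh_v zeta B x0 y t j * base_pred B x0 y j t)"

definition flh_ogd :: "real \<Rightarrow> real \<Rightarrow> real \<Rightarrow> (nat \<Rightarrow> real) \<Rightarrow> nat \<Rightarrow> real" where
  "flh_ogd G B x0 y t = flh_pred (1 / (2 * (G + B)\<^sup>2)) B x0 y t"

definition TV :: "real \<Rightarrow> nat \<Rightarrow> real \<Rightarrow> (nat \<Rightarrow> real) set" where
  "TV B n C = {w. (\<Sum>t = 2..n. \<bar>w t - w (t - 1)\<bar>) \<le> C \<and> (\<forall>t\<in>{1..n}. \<bar>w t\<bar> \<le> B)}"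

end

theory Submission
  imports Defs
begin

lemma clip_bound: "0 \<le> B \<Longrightarrow> \<bar>clip B x\<bar> \<le> B"
  by (auto simp: clip_def)

lemma clip_nonexp: "\<bar>u\<bar> \<le> B \<Longrightarrow> \<bar>clip B a - u\<bar> \<le> \<bar>a - u\<bar>"
  by (auto simp: clip_def)

lemma ogd_bound: "\<bar>x0\<bar> \<le> B \<Longrightarrow> 0 \<le> B \<Longrightarrow> \<bar>ogd B x0 y j k\<bar> \<le> B"
  by (cases k) (auto simp: clip_bound)

lemma base_bound: "\<bar>x0\<bar> \<le> B \<Longrightarrow> 0 \<le> B \<Longrightarrow> \<bar>base_pred B x0 y j t\<bar> \<le> B"
  by (simp add: base_pred_def ogd_bound)

lemma ogd_step:
  fixes x y u G B :: real and k :: nat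
  assumes "\<bar>u\<bar> \<le> B" "\<bar>x\<bar> \<le> B" "\<bar>y\<bar> \<le> G"
  defines "x' \<equiv> clip B (x - (1 / (2 * real (k + 1))) * (2 * (x - y)))"
  shows "(y - x)\<^sup>2 - (y - u)\<^sup>2 \<le> real k * (x - u)\<^sup>2 - real (k+1) * (x' - u)\<^sup>2 + (G + B)\<^sup>2 / real (k+1)"
proof -
  define a where "a = x - (x - y) / real (k+1)"
  have "(1 / (2 * real (k + 1))) * (2 * (x - y)) = (x - y) / real (k+1)" by (simp add: field_simps)
  hence x'a: "x' = clip B a" unfolding x'_def a_def by simp
  have "\<bar>x' - u\<bar> \<le> \<bar>a - u\<bar>" using x'a clip_nonexp[OF assms(1)] by simp
  hence sq: "(x' - u)\<^sup>2 \<le> (a - u)\<^sup>2" by (metis abs_ge_zero power2_abs power_mono)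
  have tp: "real (k+1) > 0" by simp
  have e0: "T * ((x - u) - (x-y)/T)\<^sup>2 = T*(x-u)\<^sup>2 - 2*(x-y)*(x-u) + (x-y)\<^sup>2/T" if "T > 0" for T::real
    using that by (simp add: field_simps power2_eq_square)
  have "a - u = (x - u) - (x - y) / real (k+1)" unfolding a_def by simp
  hence e1: "real (k+1) * (a - u)\<^sup>2 = real (k+1) * (x - u)\<^sup>2 - 2 * (x - y) * (x - u) + (x - y)\<^sup>2 / real (k+1)"
    using e0[OF tp] by (simp only:)
  have xy: "(x - y)\<^sup>2 \<le> (G + B)\<^sup>2"
  proof -
    have "\<bar>x - y\<bar> \<le> G + B" using assms by linarith
    thus ?thesis by (metis abs_ge_zero power2_abs power_mono)
  qed
  have "(x - y)\<^sup>2 / real (k+1) \<le> (G + B)\<^sup>2 / real (k+1)" using xy tp by (simp add: divide_right_mono)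
  moreover have "real (k+1) * (x' - u)\<^sup>2 \<le> real (k+1) * (a - u)\<^sup>2" using sq tp by simp
  moreover have "(y - x)\<^sup>2 - (y - u)\<^sup>2 = 2 * (x - y) * (x - u) - (x - u)\<^sup>2" by (simp add: power2_eq_square algebra_simps)
  ultimately show ?thesis using e1 by (simp add: algebra_simps)
qed

lemma ogd_regret_aux:
  assumes "\<bar>x0\<bar> \<le> B" "\<bar>u\<bar> \<le> B" "\<forall>k<m. \<bar>y (j+k)\<bar> \<le> G" "0 \<le> B"
  shows "(\<Sum>k<m. (y (j+k) - ogd B x0 y j k)\<^sup>2 - (y (j+k) - u)\<^sup>2)
          \<le> (G + B)\<^sup>2 * harm m - real m * (ogd B x0 y j m - u)\<^sup>2"
  using assms(3)
proof (induction m)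
  case 0 then show ?case by (simp add: harm_def)
next
  case (Suc m)
  have IH: "(\<Sum>k<m. (y (j+k) - ogd B x0 y j k)\<^sup>2 - (y (j+k) - u)\<^sup>2)
          \<le> (G + B)\<^sup>2 * harm m - real m * (ogd B x0 y j m - u)\<^sup>2" using Suc by auto
  have st: "(y (j+m) - ogd B x0 y j m)\<^sup>2 - (y (j+m) - u)\<^sup>2 \<le> real m * (ogd B x0 y j m - u)\<^sup>2
     - real (m+1) * (ogd B x0 y j (Suc m) - u)\<^sup>2 + (G + B)\<^sup>2 / real (m+1)"
    using ogd_step[OF assms(2) ogd_bound[OF assms(1) assms(4)], where y="y (j+m)" and G=G and k=m] Suc.prems by simp
  have h: "harm (Suc m) = harm m + 1 / real (m+1)" by (simp add: harm_Suc field_simps)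
  show ?case using IH st h by (simp add: algebra_simps)
qed

lemma harm_le_ln: "1 \<le> m \<Longrightarrow> harm m \<le> ln (real m) + 1"
  using euler_mascheroni_sequence_decreasing[of 1 m] by (simp add: harm_def)

lemma ogd_regret:
  assumes "\<bar>x0\<bar> \<le> B" "\<bar>u\<bar> \<le> B" "\<forall>k<m. \<bar>y (j+k)\<bar> \<le> G" "0 \<le> B" "1 \<le> m"
  shows "(\<Sum>k<m. (y (j+k) - ogd B x0 y j k)\<^sup>2 - (y (j+k) - u)\<^sup>2) \<le> (G + B)\<^sup>2 * (ln (real m) + 1)"
proof -
  have "(\<Sum>k<m. (y (j+k) - ogd B x0 y j k)\<^sup>2 - (y (j+k) - u)\<^sup>2) \<le> (G + B)\<^sup>2 * harm m"
    using ogd_regret_aux[OF assms(1-4)] by (smt (verit) mult_nonneg_nonneg of_nat_0_le_iff zero_le_power2)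
  also have "\<dots> \<le> (G + B)\<^sup>2 * (ln (real m) + 1)" using harm_le_ln[OF assms(5)] by (simp add: mult_left_mono)
  finally show ?thesis .
qed


lemma flh_v_Suc:
  assumes "1 \<le> t"
  shows "flh_v \<zeta> B x0 y (Suc t) i = (if 1 \<le> i \<and> i \<le> t then (1 - 1 / real (t+1)) *
     (flh_v \<zeta> B x0 y t i * exp (- \<zeta> * (y t - base_pred B x0 y i t)\<^sup>2) /
      (\<Sum>j=1..t. flh_v \<zeta> B x0 y t j * exp (- \<zeta> * (y t - base_pred B x0 y j t)\<^sup>2)))
     else if i = t + 1 then 1 / real (t+1) else 0)"
proof -
  obtain s where "t = Suc s" using assms by (cases t) auto
  then show ?thesis by (simp add: Let_def)
qed

lemma flh_v_props:
  assumes "1 \<le> t"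
  shows "(\<forall>i. 1 \<le> i \<and> i \<le> t \<longrightarrow> 0 < flh_v \<zeta> B x0 y t i) \<and> (\<Sum>i=1..t. flh_v \<zeta> B x0 y t i) = 1"
  using assms
proof (induction t)
  case 0 then show ?case by simp
next
  case (Suc t)
  show ?case
  proof (cases "t = 0")
    case True then show ?thesis by simp
  next
    case False
    hence t1: "1 \<le> t" by simp
    have IH: "\<forall>i. 1 \<le> i \<and> i \<le> t \<longrightarrow> 0 < flh_v \<zeta> B x0 y t i" "(\<Sum>i=1..t. flh_v \<zeta> B x0 y t i) = 1"
      using Suc.IH t1 by auto
    define e where "e j = exp (- \<zeta> * (y t - base_pred B x0 y j t)\<^sup>2)" for j
    define Z where "Z = (\<Sum>j=1..t. flh_v \<zeta> B x0 y t j * e j)"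
    have Zpos: "Z > 0" unfolding Z_def
      by (rule sum_pos) (use IH t1 in \<open>auto simp: e_def\<close>)
    have vS: "flh_v \<zeta> B x0 y (Suc t) i = (if 1 \<le> i \<and> i \<le> t then (1 - 1 / real (t+1)) *
       (flh_v \<zeta> B x0 y t i * e i / Z) else if i = t + 1 then 1 / real (t+1) else 0)" for i
      using flh_v_Suc[OF t1] unfolding e_def Z_def by simp
    have c: "1 - 1 / real (t+1) > 0" using t1 by (simp add: field_simps)
    have pos: "\<forall>i. 1 \<le> i \<and> i \<le> Suc t \<longrightarrow> 0 < flh_v \<zeta> B x0 y (Suc t) i"
    proof (intro allI impI)
      fix i assume i: "1 \<le> i \<and> i \<le> Suc t"
      show "0 < flh_v \<zeta> B x0 y (Suc t) i"
      proof (cases "i \<le> t")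
        case True
        then show ?thesis using vS[of i] i IH c Zpos by (simp add: e_def)
      next
        case False
        then show ?thesis using vS[of i] i by simp
      qed
    qed
    have "(\<Sum>i=1..Suc t. flh_v \<zeta> B x0 y (Suc t) i) = (\<Sum>i=1..t. flh_v \<zeta> B x0 y (Suc t) i) + 1 / real (t+1)"
      using vS[of "Suc t"] by simp
    also have "(\<Sum>i=1..t. flh_v \<zeta> B x0 y (Suc t) i) = (\<Sum>i=1..t. (1 - 1 / real (t+1)) * (flh_v \<zeta> B x0 y t i * e i / Z))"
      by (rule sum.cong) (auto simp: vS)
    also have "\<dots> = (1 - 1 / real (t+1)) * (Z / Z)"
      by (simp add: sum_distrib_left[symmetric] sum_divide_distrib[symmetric] Z_def)
    also have "\<dots> = 1 - 1 / real (t+1)" using Zpos by simp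
    finally have "(\<Sum>i=1..Suc t. flh_v \<zeta> B x0 y (Suc t) i) = 1" by simp
    with pos show ?thesis by blast
  qed
qed

lemma flh_v_diag: "1 \<le> t \<Longrightarrow> flh_v \<zeta> B x0 y t t = 1 / real t"
proof (cases t)
  case 0 then show ?thesis by simp
next
  case (Suc s)
  then show ?thesis
  proof (cases "s = 0")
    case True with Suc show ?thesis by simp
  next
    case False
    hence "1 \<le> s" by simp
    then show ?thesis using flh_v_Suc[of s] Suc by simp
  qed
qed

lemma flh_v_le1:
  assumes "1 \<le> i" "i \<le> t"
  shows "flh_v \<zeta> B x0 y t i \<le> 1"
proof -
  have t: "1 \<le> t" using assms by simp
  note P = flh_v_props[OF t, of \<zeta> B x0 y]
  have "flh_v \<zeta> B x0 y t i \<le> (\<Sum>i=1..t. flh_v \<zeta> B x0 y t i)"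
    by (rule member_le_sum) (use P assms in \<open>auto intro: less_imp_le\<close>)
  with P show ?thesis by simp
qed

lemma mix:
  fixes a z :: "nat \<Rightarrow> real"
  assumes "finite S" "S \<noteq> {}" "\<forall>j\<in>S. 0 \<le> a j" "sum a S = 1" "\<forall>j\<in>S. \<bar>z j\<bar> \<le> B"
    "\<bar>yy\<bar> \<le> G" "0 \<le> B" "0 < G + B"
  shows "(\<Sum>j\<in>S. a j * exp (- (1 / (2 * (G + B)\<^sup>2)) * (yy - z j)\<^sup>2))
        \<le> exp (- (1 / (2 * (G + B)\<^sup>2)) * (yy - (\<Sum>j\<in>S. a j * z j))\<^sup>2)"
proof -
  define \<zeta> where "\<zeta> = 1 / (2 * (G + B)\<^sup>2)"
  have zp: "\<zeta> > 0" using assms unfolding \<zeta>_def by simp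
  define h where "h x = - exp (- \<zeta> * (yy - x)\<^sup>2)" for x
  define h1 where "h1 x = - (2 * \<zeta> * (yy - x) * exp (- \<zeta> * (yy - x)\<^sup>2))" for x
  define h2 where "h2 x = 2 * \<zeta> * exp (- \<zeta> * (yy - x)\<^sup>2) * (1 - 2 * \<zeta> * (yy - x)\<^sup>2)" for x
  have d1: "DERIV h x :> h1 x" for x
    unfolding h_def h1_def
    by (auto intro!: derivative_eq_intros simp: power2_eq_square algebra_simps)
  have d2: "DERIV h1 x :> h2 x" for x
    unfolding h1_def h2_def
    by (auto intro!: derivative_eq_intros simp: power2_eq_square algebra_simps)
  have h2nn: "h2 x \<ge> 0" if "x \<in> {-B..B}" for x
  proof -
    have "\<bar>yy - x\<bar> \<le> G + B" using that assms by auto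
    hence "(yy - x)\<^sup>2 \<le> (G + B)\<^sup>2" by (metis abs_ge_zero power2_abs power_mono)
    hence "2 * \<zeta> * (yy - x)\<^sup>2 \<le> 1" unfolding \<zeta>_def using assms by (simp add: field_simps)
    thus ?thesis unfolding h2_def using zp by simp
  qed
  have cv: "convex_on {-B..B} h"
    by (rule f''_ge0_imp_convex[OF convex_real_interval(5) d1 d2 h2nn])
  have "h (\<Sum>j\<in>S. a j *\<^sub>R z j) \<le> (\<Sum>j\<in>S. a j * h (z j))"
    by (rule convex_on_sum[OF assms(1,2) cv assms(4)]) (use assms(3,5) in auto)
  thus ?thesis unfolding h_def \<zeta>_def by (simp add: sum_negf)
qed


lemma flh_step:
  assumes "1 \<le> r" "r \<le> t" "\<bar>y t\<bar> \<le> G" "0 \<le> B" "\<bar>x0\<bar> \<le> B" "0 < G + B"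
    and z: "\<zeta> = 1 / (2 * (G + B)\<^sup>2)"
  shows "\<zeta> * ((y t - flh_pred \<zeta> B x0 y t)\<^sup>2 - (y t - base_pred B x0 y r t)\<^sup>2)
     \<le> (ln (flh_v \<zeta> B x0 y (Suc t) r) - ln (flh_v \<zeta> B x0 y t r)) + (ln (real (Suc t)) - ln (real t))"
proof -
  have t1: "1 \<le> t" using assms by simp
  define v where "v = flh_v \<zeta> B x0 y t"
  define e where "e j = exp (- \<zeta> * (y t - base_pred B x0 y j t)\<^sup>2)" for j
  define Z where "Z = (\<Sum>j=1..t. v j * e j)"
  define P where "P = flh_pred \<zeta> B x0 y t"
  note props = flh_v_props[OF t1, of \<zeta> B x0 y]
  have vpos: "\<And>j. 1 \<le> j \<Longrightarrow> j \<le> t \<Longrightarrow> v j > 0" using props unfolding v_def by blast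
  have Zpos: "Z > 0" unfolding Z_def
    by (rule sum_pos) (use vpos t1 in \<open>auto simp: e_def\<close>)
  have P_eq: "P = (\<Sum>j=1..t. v j * base_pred B x0 y j t)" unfolding P_def v_def flh_pred_def by simp
  have ZP: "Z \<le> exp (- \<zeta> * (y t - P)\<^sup>2)"
    unfolding Z_def e_def P_eq z
    by (rule mix) (use t1 vpos props assms base_bound in \<open>auto simp: v_def intro: less_imp_le\<close>)
  have vS: "flh_v \<zeta> B x0 y (Suc t) r = (1 - 1 / real (t+1)) * (v r * e r / Z)"
    using flh_v_Suc[OF t1, of \<zeta> B x0 y r] assms unfolding v_def e_def Z_def by simp
  have c: "1 - 1 / real (t+1) = real t / real (Suc t)" using t1 by (simp add: field_simps)
  have vr: "v r > 0" using vpos assms by simp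
  have "ln (flh_v \<zeta> B x0 y (Suc t) r) = ln (real t) - ln (real (Suc t)) + ln (v r) + ln (e r) - ln Z"
    unfolding vS c using vr Zpos t1 by (simp add: ln_mult ln_div e_def)
  moreover have "ln Z \<le> - \<zeta> * (y t - P)\<^sup>2" using ZP Zpos by (metis ln_exp ln_le_cancel_iff exp_gt_zero)
  moreover have "ln (e r) = - \<zeta> * (y t - base_pred B x0 y r t)\<^sup>2" by (simp add: e_def)
  ultimately show ?thesis unfolding v_def P_def by (simp add: algebra_simps)
qed

lemma flh_interval:
  assumes "1 \<le> r" "r \<le> s" "\<forall>t\<in>{r..s}. \<bar>y t\<bar> \<le> G" "0 \<le> B" "\<bar>x0\<bar> \<le> B" "0 < G + B"
    and z: "\<zeta> = 1 / (2 * (G + B)\<^sup>2)"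
  shows "(\<Sum>t=r..s. (y t - flh_pred \<zeta> B x0 y t)\<^sup>2 - (y t - base_pred B x0 y r t)\<^sup>2) \<le> ln (real s + 1) / \<zeta>"
proof -
  have zp: "\<zeta> > 0" using z assms by simp
  define L where "L t = ln (flh_v \<zeta> B x0 y t r)" for t
  define l where "l t = ln (real t)" for t
  have "\<zeta> * (\<Sum>t=r..s. (y t - flh_pred \<zeta> B x0 y t)\<^sup>2 - (y t - base_pred B x0 y r t)\<^sup>2)
      = (\<Sum>t=r..s. \<zeta> * ((y t - flh_pred \<zeta> B x0 y t)\<^sup>2 - (y t - base_pred B x0 y r t)\<^sup>2))"
    by (simp add: sum_distrib_left)
  also have "\<dots> \<le> (\<Sum>t=r..s. (L (Suc t) - L t) + (l (Suc t) - l t))"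
  proof (rule sum_mono)
    fix t assume t: "t \<in> {r..s}"
    show "\<zeta> * ((y t - flh_pred \<zeta> B x0 y t)\<^sup>2 - (y t - base_pred B x0 y r t)\<^sup>2) \<le> (L (Suc t) - L t) + (l (Suc t) - l t)"
      unfolding L_def l_def by (rule flh_step[OF _ _ _ _ _ _ z]) (use assms t in auto)
  qed
  also have "\<dots> = (L (Suc s) - L r) + (l (Suc s) - l r)"
    using assms by (simp add: sum.distrib sum_Suc_diff)
  also have "L (Suc s) \<le> 0"
  proof -
    have "flh_v \<zeta> B x0 y (Suc s) r > 0" using flh_v_props[of "Suc s" \<zeta> B x0 y] assms by auto
    moreover have "flh_v \<zeta> B x0 y (Suc s) r \<le> 1" using flh_v_le1[of r "Suc s"] assms by simp
    ultimately show ?thesis unfolding L_def by simp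
  qed
  also have "L r = - l r" using flh_v_diag[of r \<zeta> B x0 y] assms by (simp add: L_def l_def ln_div)
  finally have "\<zeta> * (\<Sum>t=r..s. (y t - flh_pred \<zeta> B x0 y t)\<^sup>2 - (y t - base_pred B x0 y r t)\<^sup>2) \<le> ln (real s + 1)"
    by (simp add: l_def add.commute)
  thus ?thesis using zp by (simp add: field_simps mult.commute)
qed


definition Lc :: "real \<Rightarrow> real \<Rightarrow> nat \<Rightarrow> real" where
  "Lc G B n = 2 * (G + B)\<^sup>2 * ln (real n + 1) + (G + B)\<^sup>2 * (ln (real n) + 1)"

lemma interval_regret:
  assumes "1 \<le> r" "r \<le> s" "s \<le> n" "\<forall>t\<in>{1..n}. \<bar>y t\<bar> \<le> G" "0 \<le> B" "\<bar>x0\<bar> \<le> B" "0 < G + B" "\<bar>u\<bar> \<le> B"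
  shows "(\<Sum>t=r..s. (y t - flh_ogd G B x0 y t)\<^sup>2 - (y t - u)\<^sup>2) \<le> Lc G B n"
proof -
  define \<zeta> where "\<zeta> = 1 / (2 * (G + B)\<^sup>2)"
  have A: "(\<Sum>t=r..s. (y t - flh_pred \<zeta> B x0 y t)\<^sup>2 - (y t - base_pred B x0 y r t)\<^sup>2) \<le> ln (real s + 1) / \<zeta>"
    by (rule flh_interval[OF assms(1,2) _ assms(5,6,7) \<zeta>_def]) (use assms in auto)
  have "ln (real s + 1) / \<zeta> = 2 * (G + B)\<^sup>2 * ln (real s + 1)" unfolding \<zeta>_def by simp
  also have "\<dots> \<le> 2 * (G + B)\<^sup>2 * ln (real n + 1)" using assms by (simp add: mult_left_mono)
  finally have A': "(\<Sum>t=r..s. (y t - flh_pred \<zeta> B x0 y t)\<^sup>2 - (y t - base_pred B x0 y r t)\<^sup>2) \<le> 2 * (G + B)\<^sup>2 * ln (real n + 1)"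
    using A by linarith
  define m where "m = s - r + 1"
  have m1: "1 \<le> m" "m \<le> n" using assms unfolding m_def by auto
  have img: "{r..s} = (\<lambda>k. r + k) ` {..<m}"
  proof
    show "{r..s} \<subseteq> (\<lambda>k. r + k) ` {..<m}"
    proof
      fix t assume "t \<in> {r..s}"
      hence "t = r + (t - r)" "t - r < m" unfolding m_def by auto
      thus "t \<in> (\<lambda>k. r + k) ` {..<m}" by blast
    qed
  qed (use assms in \<open>auto simp: m_def\<close>)
  have "(\<Sum>t=r..s. (y t - base_pred B x0 y r t)\<^sup>2 - (y t - u)\<^sup>2)
      = (\<Sum>k<m. (y (r+k) - ogd B x0 y r k)\<^sup>2 - (y (r+k) - u)\<^sup>2)"
    unfolding img by (subst sum.reindex) (auto simp: base_pred_def)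
  also have "\<dots> \<le> (G + B)\<^sup>2 * (ln (real m) + 1)"
    by (rule ogd_regret[OF assms(6,8) _ assms(5) m1(1)]) (use assms in \<open>auto simp: m_def\<close>)
  also have "\<dots> \<le> (G + B)\<^sup>2 * (ln (real n) + 1)" using m1 by (simp add: mult_left_mono)
  finally have B': "(\<Sum>t=r..s. (y t - base_pred B x0 y r t)\<^sup>2 - (y t - u)\<^sup>2) \<le> (G + B)\<^sup>2 * (ln (real n) + 1)" .
  have fo: "flh_ogd G B x0 y t = flh_pred \<zeta> B x0 y t" for t by (simp add: flh_ogd_def \<zeta>_def)
  have "(\<Sum>t=r..s. (y t - flh_pred \<zeta> B x0 y t)\<^sup>2 - (y t - base_pred B x0 y r t)\<^sup>2) +
     (\<Sum>t=r..s. (y t - base_pred B x0 y r t)\<^sup>2 - (y t - u)\<^sup>2) = 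
     (\<Sum>t=r..s. ((y t - flh_pred \<zeta> B x0 y t)\<^sup>2 - (y t - base_pred B x0 y r t)\<^sup>2) +
     ((y t - base_pred B x0 y r t)\<^sup>2 - (y t - u)\<^sup>2))" by (simp only: sum.distrib)
  also have "\<dots> = (\<Sum>t=r..s. (y t - flh_ogd G B x0 y t)\<^sup>2 - (y t - u)\<^sup>2)"
    unfolding fo by (rule sum.cong) auto
  finally have "(\<Sum>t=r..s. (y t - flh_ogd G B x0 y t)\<^sup>2 - (y t - u)\<^sup>2) =
     (\<Sum>t=r..s. (y t - flh_pred \<zeta> B x0 y t)\<^sup>2 - (y t - base_pred B x0 y r t)\<^sup>2) +
     (\<Sum>t=r..s. (y t - base_pred B x0 y r t)\<^sup>2 - (y t - u)\<^sup>2)" by simp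
  with A' B' show ?thesis unfolding Lc_def by linarith
qed

lemma flh_pred_bound:
  assumes "1 \<le> t" "\<bar>x0\<bar> \<le> B" "0 \<le> B"
  shows "\<bar>flh_pred \<zeta> B x0 y t\<bar> \<le> B"
proof -
  note P = flh_v_props[OF assms(1), of \<zeta> B x0 y]
  have "\<bar>flh_pred \<zeta> B x0 y t\<bar> \<le> (\<Sum>j=1..t. \<bar>flh_v \<zeta> B x0 y t j * base_pred B x0 y j t\<bar>)"
    unfolding flh_pred_def by (rule sum_abs)
  also have "\<dots> \<le> (\<Sum>j=1..t. flh_v \<zeta> B x0 y t j * B)"
  proof (rule sum_mono)
    fix j assume "j \<in> {1..t}"
    hence "flh_v \<zeta> B x0 y t j > 0" using P by auto
    thus "\<bar>flh_v \<zeta> B x0 y t j * base_pred B x0 y j t\<bar> \<le> flh_v \<zeta> B x0 y t j * B"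
      using base_bound[OF assms(2,3)] by (simp add: abs_mult mult_left_mono)
  qed
  also have "\<dots> = B" using P by (simp add: sum_distrib_right[symmetric])
  finally show ?thesis .
qed


primrec bst :: "(nat \<Rightarrow> real) \<Rightarrow> nat \<Rightarrow> nat" where
  "bst p 0 = 1"
| "bst p (Suc s) = (if 1 \<le> s \<and> p (Suc s) \<noteq> p s then Suc s else bst p s)"

definition chg :: "(nat \<Rightarrow> real) \<Rightarrow> nat \<Rightarrow> real" where
  "chg p s = (\<Sum>t=2..s. if p t \<noteq> p (t - 1) then 1 else 0)"

lemma bst_props: "1 \<le> s \<Longrightarrow> 1 \<le> bst p s \<and> bst p s \<le> s \<and> (\<forall>t. bst p s \<le> t \<and> t \<le> s \<longrightarrow> p t = p s)"
proof (induction s)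
  case 0 then show ?case by simp
next
  case (Suc s)
  show ?case
  proof (cases "s = 0")
    case True
    have b: "bst p (Suc s) = Suc s" using True by simp
    have "\<forall>t. bst p (Suc s) \<le> t \<and> t \<le> Suc s \<longrightarrow> p t = p (Suc s)"
    proof (intro allI impI)
      fix t assume "bst p (Suc s) \<le> t \<and> t \<le> Suc s"
      hence "t = Suc s" unfolding b by arith
      thus "p t = p (Suc s)" by simp
    qed
    moreover have "1 \<le> bst p (Suc s)" "bst p (Suc s) \<le> Suc s" unfolding b by simp_all
    ultimately show ?thesis by blast
  next
    case False
    hence s1: "1 \<le> s" by simp
    note IH = Suc.IH[OF s1]
    have IH1: "1 \<le> bst p s" "bst p s \<le> s" and IH2: "\<forall>t. bst p s \<le> t \<and> t \<le> s \<longrightarrow> p t = p s"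
      using IH by blast+
    show ?thesis
    proof (cases "p (Suc s) \<noteq> p s")
      case True
      hence b: "bst p (Suc s) = Suc s" using False by simp
      have "\<forall>t. bst p (Suc s) \<le> t \<and> t \<le> Suc s \<longrightarrow> p t = p (Suc s)"
      proof (intro allI impI)
        fix t assume "bst p (Suc s) \<le> t \<and> t \<le> Suc s"
        hence "t = Suc s" unfolding b by arith
        thus "p t = p (Suc s)" by simp
      qed
      moreover have "1 \<le> bst p (Suc s)" "bst p (Suc s) \<le> Suc s" unfolding b by simp_all
      ultimately show ?thesis by blast
    next
      case F2: False
      hence b: "bst p (Suc s) = bst p s" by simp
      have "\<forall>t. bst p (Suc s) \<le> t \<and> t \<le> Suc s \<longrightarrow> p t = p (Suc s)"
      proof (intro allI impI)
        fix t assume t: "bst p (Suc s) \<le> t \<and> t \<le> Suc s"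
        show "p t = p (Suc s)"
        proof (cases "t = Suc s")
          case True then show ?thesis by simp
        next
          case False
          hence "t \<le> s" using t by simp
          hence "p t = p s" using IH2 t unfolding b by blast
          with F2 show ?thesis by simp
        qed
      qed
      moreover have "1 \<le> bst p (Suc s)" "bst p (Suc s) \<le> Suc s" unfolding b using IH1 by simp_all
      ultimately show ?thesis by blast
    qed
  qed
qed

lemma block_regret:
  assumes "1 \<le> n" "\<forall>t\<in>{1..n}. \<bar>y t\<bar> \<le> G" "0 \<le> B" "\<bar>x0\<bar> \<le> B" "0 < G + B"
    and pb: "\<forall>t\<in>{1..n}. \<bar>p t\<bar> \<le> B"
  shows "(\<Sum>t=1..n. (y t - flh_ogd G B x0 y t)\<^sup>2 - (y t - p t)\<^sup>2) \<le> Lc G B n * (1 + chg p n)"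
proof -
  define f where "f t u = (y t - flh_ogd G B x0 y t)\<^sup>2 - (y t - u)\<^sup>2" for t u
  have Q: "s \<le> n \<Longrightarrow> (\<Sum>t=1..s. f t (p t)) \<le> Lc G B n * chg p s + (\<Sum>t=bst p s..s. f t (p s))" if "1 \<le> s" for s
    using that
  proof (induction s rule: dec_induct)
    case base then show ?case by (simp add: chg_def)
  next
    case (step s)
    have s1: "1 \<le> s" using step by simp
    have IH: "(\<Sum>t=1..s. f t (p t)) \<le> Lc G B n * chg p s + (\<Sum>t=bst p s..s. f t (p s))" using step by simp
    have bp: "1 \<le> bst p s" "bst p s \<le> s" using bst_props[OF s1, of p] by blast+
    have ch: "chg p (Suc s) = chg p s + (if p (Suc s) \<noteq> p s then 1 else 0)"
      unfolding chg_def using s1 by (subst sum.cl_ivl_Suc) simp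
    show ?case
    proof (cases "p (Suc s) \<noteq> p s")
      case True
      have "(\<Sum>t=bst p s..s. f t (p s)) \<le> Lc G B n"
        unfolding f_def by (rule interval_regret) (use bp step assms in auto)
      then show ?thesis using IH True s1 ch by (simp add: algebra_simps)
    next
      case False
      have "(\<Sum>t=bst p s..Suc s. f t (p (Suc s))) = (\<Sum>t=bst p s..s. f t (p s)) + f (Suc s) (p (Suc s))"
        using bp False by (subst sum.cl_ivl_Suc) auto
      then show ?thesis using IH False s1 ch bp by simp
    qed
  qed
  have "(\<Sum>t=1..n. f t (p t)) \<le> Lc G B n * chg p n + (\<Sum>t=bst p n..n. f t (p n))"
    using Q[OF assms(1)] by simp
  moreover have "(\<Sum>t=bst p n..n. f t (p n)) \<le> Lc G B n"
  proof -
    have bb: "1 \<le> bst p n" "bst p n \<le> n" using bst_props[OF assms(1), of p] by blast+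
    show ?thesis unfolding f_def by (rule interval_regret) (use bb assms in auto)
  qed
  ultimately have "(\<Sum>t=1..n. f t (p t)) \<le> Lc G B n * (1 + chg p n)" by (simp add: distrib_left)
  thus ?thesis by (simp only: f_def)
qed


primrec qz :: "real \<Rightarrow> real \<Rightarrow> (nat \<Rightarrow> real) \<Rightarrow> nat \<Rightarrow> real" where
  "qz B h w 0 = w 1"
| "qz B h w (Suc t) = (if h < \<bar>w (Suc t) - qz B h w t\<bar> \<or> ((w (Suc t) = B \<or> w (Suc t) = - B) \<and> w (Suc t) \<noteq> qz B h w t)
      then w (Suc t) else qz B h w t)"

lemma qz1: "qz B h w 1 = w 1"
  by simp

lemma qz_inv:
  assumes "0 < h" "\<forall>t\<in>{1..n}. \<bar>w t\<bar> \<le> B" "1 \<le> t" "t \<le> n"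
  shows "\<bar>w t - qz B h w t\<bar> \<le> h \<and> \<bar>qz B h w t\<bar> \<le> B \<and> ((w t = B \<or> w t = - B) \<longrightarrow> qz B h w t = w t)"
  using assms(3,4)
proof (induction t rule: dec_induct)
  case base then show ?case using assms by simp
next
  case (step s)
  have IH: "\<bar>w s - qz B h w s\<bar> \<le> h" "\<bar>qz B h w s\<bar> \<le> B" "(w s = B \<or> w s = - B) \<longrightarrow> qz B h w s = w s"
    using step by auto
  have wb: "\<bar>w (Suc s)\<bar> \<le> B" using assms step by simp
  show ?case
  proof (cases "h < \<bar>w (Suc s) - qz B h w s\<bar> \<or> ((w (Suc s) = B \<or> w (Suc s) = - B) \<and> w (Suc s) \<noteq> qz B h w s)")
    case True
    then have "qz B h w (Suc s) = w (Suc s)" by simp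
    then show ?thesis using wb assms(1) by (simp del: qz.simps)
  next
    case False
    then have e: "qz B h w (Suc s) = qz B h w s" by simp
    show ?thesis unfolding e using False IH by auto
  qed
qed

lemma qz_change:
  assumes "0 < h" "\<forall>t\<in>{1..n}. \<bar>w t\<bar> \<le> B" "1 \<le> s" "Suc s \<le> n" "qz B h w (Suc s) \<noteq> qz B h w s"
  shows "qz B h w (Suc s) = w (Suc s) \<and> (qz B h w (Suc s) - qz B h w s) * (w (Suc s) - w s) > 0"
proof -
  have c: "h < \<bar>w (Suc s) - qz B h w s\<bar> \<or> ((w (Suc s) = B \<or> w (Suc s) = - B) \<and> w (Suc s) \<noteq> qz B h w s)"
    using assms(5) by (auto split: if_splits)
  hence q: "qz B h w (Suc s) = w (Suc s)" by simp
  have I: "\<bar>w s - qz B h w s\<bar> \<le> h" "\<bar>qz B h w s\<bar> \<le> B" "(w s = B \<or> w s = - B) \<longrightarrow> qz B h w s = w s"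
    using qz_inv[OF assms(1,2), of s] assms by auto
  have wb: "\<bar>w (Suc s)\<bar> \<le> B" "\<bar>w s\<bar> \<le> B" using assms by auto
  have "(w (Suc s) - qz B h w s) * (w (Suc s) - w s) > 0"
  proof (cases "h < \<bar>w (Suc s) - qz B h w s\<bar>")
    case True
    show ?thesis
    proof (cases "w (Suc s) - qz B h w s > 0")
      case True2: True
      hence "w (Suc s) - w s > 0" using True I by linarith
      thus ?thesis using True2 by simp
    next
      case False
      hence "w (Suc s) - qz B h w s < 0" "w (Suc s) - w s < 0" using True I by linarith+
      thus ?thesis by (simp add: mult_neg_neg)
    qed
  next
    case False
    hence c2: "(w (Suc s) = B \<or> w (Suc s) = - B) \<and> w (Suc s) \<noteq> qz B h w s" using c by simp
    show ?thesis
    proof (cases "w (Suc s) = B")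
      case True
      hence "qz B h w s < B" using c2 I by auto
      moreover have "w s < B" using I wb True c2 by force
      ultimately show ?thesis using True by simp
    next
      case False
      hence wm: "w (Suc s) = - B" using c2 by simp
      hence "qz B h w s > - B" using c2 I by auto
      moreover have "w s > - B" using I wb wm c2 by force
      ultimately show ?thesis using wm by (simp add: mult_neg_neg)
    qed
  qed
  with q show ?thesis by simp
qed

definition isb :: "real \<Rightarrow> real \<Rightarrow> real" where
  "isb B x = (if x = B \<or> x = - B then 1 else 0)"

lemma qz_small:
  assumes "0 < h" "h < 2 * B" "\<forall>t\<in>{1..n}. \<bar>w t\<bar> \<le> B" "1 \<le> s" "Suc s \<le> n" "qz B h w (Suc s) \<noteq> qz B h w s"
    "\<bar>qz B h w (Suc s) - qz B h w s\<bar> \<le> h"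
  shows "isb B (qz B h w (Suc s)) = 1 \<and> isb B (qz B h w s) = 0"
proof -
  have c: "h < \<bar>w (Suc s) - qz B h w s\<bar> \<or> ((w (Suc s) = B \<or> w (Suc s) = - B) \<and> w (Suc s) \<noteq> qz B h w s)"
    using assms(6) by (auto split: if_splits)
  hence q: "qz B h w (Suc s) = w (Suc s)" by simp
  hence c2: "(w (Suc s) = B \<or> w (Suc s) = - B) \<and> w (Suc s) \<noteq> qz B h w s" using c assms(7) by auto
  have I: "\<bar>qz B h w s\<bar> \<le> B" using qz_inv[OF assms(1,3), of s] assms by auto
  have "qz B h w s \<noteq> B \<and> qz B h w s \<noteq> - B" using c2 assms(2,7) q by auto
  thus ?thesis using c2 q unfolding isb_def by auto
qed

definition nsm :: "real \<Rightarrow> (nat \<Rightarrow> real) \<Rightarrow> nat \<Rightarrow> real" where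
  "nsm h q s = (\<Sum>t=2..s. if q t \<noteq> q (t - 1) \<and> \<bar>q t - q (t - 1)\<bar> \<le> h then 1 else 0)"

definition nbg :: "real \<Rightarrow> (nat \<Rightarrow> real) \<Rightarrow> nat \<Rightarrow> real" where
  "nbg h q s = (\<Sum>t=2..s. if h < \<bar>q t - q (t - 1)\<bar> then 1 else 0)"

lemma qz_count:
  assumes "0 < h" "h < 2 * B" "\<forall>t\<in>{1..n}. \<bar>w t\<bar> \<le> B" "1 \<le> s" "s \<le> n"
  shows "nsm h (qz B h w) s - nbg h (qz B h w) s \<le> isb B (qz B h w s) - isb B (qz B h w 1)"
  using assms(4,5)
proof (induction s rule: dec_induct)
  case base then show ?case by (simp add: nsm_def nbg_def)
next
  case (step s)
  define q where "q = qz B h w"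
  have s1: "1 \<le> s" using step by simp
  have IH: "nsm h q s - nbg h q s \<le> isb B (q s) - isb B (q 1)" using step by (simp add: q_def)
  have e1: "nsm h q (Suc s) = nsm h q s + (if q (Suc s) \<noteq> q s \<and> \<bar>q (Suc s) - q s\<bar> \<le> h then 1 else 0)"
    unfolding nsm_def using s1 by (subst sum.cl_ivl_Suc) simp
  have e2: "nbg h q (Suc s) = nbg h q s + (if h < \<bar>q (Suc s) - q s\<bar> then 1 else 0)"
    unfolding nbg_def using s1 by (subst sum.cl_ivl_Suc) simp
  have ib: "0 \<le> isb B x" "isb B x \<le> 1" for x by (auto simp: isb_def)
  have "nsm h q (Suc s) - nbg h q (Suc s) \<le> isb B (q (Suc s)) - isb B (q 1)"
  proof (cases "q (Suc s) \<noteq> q s \<and> \<bar>q (Suc s) - q s\<bar> \<le> h")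
    case True
    have "isb B (q (Suc s)) = 1 \<and> isb B (q s) = 0"
      using qz_small[OF assms(1,2,3) s1] step True unfolding q_def by simp
    then show ?thesis using IH e1 e2 True by simp
  next
    case False
    show ?thesis
    proof (cases "h < \<bar>q (Suc s) - q s\<bar>")
      case True
      then show ?thesis using IH e1 e2 False ib[of "q s"] ib[of "q (Suc s)"] by simp
    next
      case F2: False
      hence "q (Suc s) = q s" using False assms(1) by auto
      then show ?thesis using IH e1 e2 False F2 by simp
    qed
  qed
  then show ?case by (simp add: q_def)
qed


definition sqerr :: "(nat \<Rightarrow> real) \<Rightarrow> nat \<Rightarrow> (nat \<Rightarrow> real) \<Rightarrow> real" where
  "sqerr y n v = (\<Sum>t=1..n. (y t - v t)\<^sup>2)"
definition tvn :: "nat \<Rightarrow> (nat \<Rightarrow> real) \<Rightarrow> real" where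
  "tvn n v = (\<Sum>t=2..n. \<bar>v t - v (t - 1)\<bar>)"
definition Phi :: "(nat \<Rightarrow> real) \<Rightarrow> nat \<Rightarrow> real \<Rightarrow> (nat \<Rightarrow> real) \<Rightarrow> real" where
  "Phi y n lam v = sqerr y n v + lam * tvn n v"
definition boxS :: "real \<Rightarrow> nat \<Rightarrow> (nat \<Rightarrow> real) set" where
  "boxS B n = Pi\<^sub>E UNIV (\<lambda>t. if t \<in> {1..n} then {-B..B} else {0})"

lemma boxS_iff: "v \<in> boxS B n \<longleftrightarrow> (\<forall>t. (t \<in> {1..n} \<longrightarrow> \<bar>v t\<bar> \<le> B) \<and> (t \<notin> {1..n} \<longrightarrow> v t = 0))"
  unfolding boxS_def by (auto simp: PiE_iff abs_le_iff split: if_splits)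

lemma coord_cont [continuous_intros]: "continuous_on S (\<lambda>x::nat\<Rightarrow>real. x i)"
  by (rule continuous_on_subset[OF continuous_on_product_coordinates]) simp

lemma boxS_compact: "compact (boxS B n)"
proof -
  have "compactin (product_topology (\<lambda>i. euclidean) UNIV) (boxS B n)"
    unfolding boxS_def by (simp add: compactin_PiE)
  then show ?thesis by (simp add: euclidean_product_topology)
qed

lemma minimizer_exists:
  assumes "0 \<le> B"
  shows "\<exists>w\<in>boxS B n. \<forall>v\<in>boxS B n. Phi y n lam w \<le> Phi y n lam v"
proof -
  have "(\<lambda>_. 0) \<in> boxS B n" using assms by (simp add: boxS_iff)
  hence ne: "boxS B n \<noteq> {}" by blast
  have "continuous_on (boxS B n) (Phi y n lam)"
    unfolding Phi_def sqerr_def tvn_def by (intro continuous_intros)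
  from continuous_attains_inf[OF boxS_compact ne this] show ?thesis by blast
qed

lemma edge_ineq:
  fixes a b s :: real
  assumes "a * b > 0" "0 \<le> s" "s * \<bar>b\<bar> \<le> \<bar>a\<bar>"
  shows "\<bar>(1 + s) * a - s * b\<bar> \<le> (1 + s) * \<bar>a\<bar> - s * \<bar>b\<bar>"
proof (cases "a > 0")
  case True
  hence b: "b > 0" using assms(1) by (simp add: zero_less_mult_iff)
  hence "s * b \<le> a" using assms(3) True by simp
  hence "(1 + s) * a - s * b \<ge> 0" using assms(2) True by (simp add: algebra_simps) (smt (verit) mult_nonneg_nonneg)
  thus ?thesis using True b by simp
next
  case False
  hence a: "a < 0" using assms(1) by (cases "a = 0") auto
  hence b: "b < 0" using assms(1) by (simp add: zero_less_mult_iff)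
  hence "s * (- b) \<le> - a" using assms(3) a by simp
  moreover have "a * s \<le> 0" using a assms(2) by (simp add: mult_nonpos_nonneg)
  ultimately have "(1 + s) * a - s * b \<le> 0" by (simp add: algebra_simps)
  thus ?thesis using a b by simp
qed

lemma deriv_key:
  fixes y w :: "nat \<Rightarrow> real"
  assumes wS: "w \<in> boxS B n" and wmin: "\<forall>v\<in>boxS B n. Phi y n lam w \<le> Phi y n lam v"
    and h: "0 < h" "h < 2 * B" and lam: "0 \<le> lam"
  shows "2 * (\<Sum>t=1..n. (y t - w t) * (w t - qz B h w t)) \<le> lam * (tvn n w - tvn n (qz B h w))"
proof -
  define q where "q = qz B h w"
  have wb: "\<forall>t\<in>{1..n}. \<bar>w t\<bar> \<le> B" and w0: "\<And>t. t \<notin> {1..n} \<Longrightarrow> w t = 0"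
    using wS by (auto simp: boxS_iff)
  have qi: "\<bar>w t - q t\<bar> \<le> h \<and> \<bar>q t\<bar> \<le> B \<and> ((w t = B \<or> w t = - B) \<longrightarrow> q t = w t)" if "t \<in> {1..n}" for t
    using qz_inv[OF h(1) wb, of t] that unfolding q_def by auto
  have qc: "(q t - q (t - 1)) * (w t - w (t - 1)) > 0" if "t \<in> {2..n}" "q t \<noteq> q (t - 1)" for t
  proof -
    have e: "Suc (t - 1) = t" using that by simp
    have "1 \<le> t - 1" "Suc (t - 1) \<le> n" "qz B h w (Suc (t - 1)) \<noteq> qz B h w (t - 1)"
      using that unfolding q_def e by auto
    from qz_change[OF h(1) wb this]
    have "0 < (qz B h w (Suc (t-1)) - qz B h w (t-1)) * (w (Suc (t-1)) - w (t-1))" by blast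
    thus ?thesis unfolding q_def e .
  qed
  define d where "d t = (if t \<in> {1..n} then w t - q t else 0)" for t
  define X where "X = (\<Sum>t=1..n. (y t - w t) * (w t - q t))"
  define D where "D = (\<Sum>t=1..n. (d t)\<^sup>2)"
  define K where "K = lam * (tvn n w - tvn n q)"
  define I1 where "I1 = {t \<in> {1..n}. \<bar>w t\<bar> < B}"
  define I2 where "I2 = {t \<in> {2..n}. q t \<noteq> q (t - 1)}"
  define A where "A = insert 1 ((\<lambda>t. (B - \<bar>w t\<bar>) / h) ` I1 \<union> (\<lambda>t. \<bar>w t - w (t - 1)\<bar> / \<bar>q t - q (t - 1)\<bar>) ` I2)"
  define s0 where "s0 = Min A"
  have finA: "finite A" unfolding A_def I1_def I2_def by auto
  have s0pos: "s0 > 0"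
    unfolding s0_def
  proof (subst Min_gr_iff[OF finA])
    show "A \<noteq> {}" unfolding A_def by simp
    show "\<forall>a\<in>A. 0 < a"
    proof
      fix a assume "a \<in> A"
      then consider "a = 1" | t where "t \<in> I1" "a = (B - \<bar>w t\<bar>) / h"
        | t where "t \<in> I2" "a = \<bar>w t - w (t - 1)\<bar> / \<bar>q t - q (t - 1)\<bar>"
        unfolding A_def by blast
      then show "0 < a"
      proof cases
        case 1 then show ?thesis by simp
      next
        case 2 then show ?thesis using h unfolding I1_def by simp
      next
        case 3
        hence "(q t - q (t - 1)) * (w t - w (t - 1)) > 0" using qc unfolding I2_def by blast
        hence "w t - w (t - 1) \<noteq> 0" "q t - q (t - 1) \<noteq> 0" by auto
        then show ?thesis using 3 by simp
      qed
    qed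
  qed
  have s0A: "s0 \<le> a" if "a \<in> A" for a unfolding s0_def using finA that by simp
  have main: "2 * X \<le> s * D + K" if s: "0 < s" "s \<le> s0" for s
  proof -
    define v where "v t = w t + s * d t" for t
    have vS: "v \<in> boxS B n"
      unfolding boxS_iff
    proof (intro allI conjI impI)
      fix t assume t: "t \<in> {1..n}"
      show "\<bar>v t\<bar> \<le> B"
      proof (cases "\<bar>w t\<bar> < B")
        case True
        hence "t \<in> I1" using t unfolding I1_def by simp
        hence "(B - \<bar>w t\<bar>) / h \<in> A" unfolding A_def by blast
        hence "s \<le> (B - \<bar>w t\<bar>) / h" using s0A s by fastforce
        hence sh: "s * h \<le> B - \<bar>w t\<bar>" using h by (simp add: field_simps)
        have "\<bar>d t\<bar> \<le> h" using qi[OF t] t unfolding d_def by simp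
        hence "s * \<bar>d t\<bar> \<le> s * h" using s by (simp add: mult_left_mono)
        moreover have "\<bar>v t\<bar> \<le> \<bar>w t\<bar> + s * \<bar>d t\<bar>" unfolding v_def using s
          by (metis abs_mult abs_of_pos abs_triangle_ineq)
        ultimately show ?thesis using sh by linarith
      next
        case False
        hence "w t = B \<or> w t = - B" using wb t by force
        hence "d t = 0" using qi[OF t] t unfolding d_def by auto
        thus ?thesis using wb t unfolding v_def by simp
      qed
    next
      fix t assume t: "t \<notin> {1..n}"
      hence "d t = 0" unfolding d_def by auto
      thus "v t = 0" unfolding v_def using w0[OF t] by simp
    qed
    hence le: "Phi y n lam w \<le> Phi y n lam v" using wmin by blast
    have sq: "sqerr y n v - sqerr y n w = - 2 * s * X + s\<^sup>2 * D"
    proof -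
      have "sqerr y n v - sqerr y n w = (\<Sum>t=1..n. (y t - v t)\<^sup>2 - (y t - w t)\<^sup>2)"
        unfolding sqerr_def by (simp add: sum_subtractf)
      also have "\<dots> = (\<Sum>t=1..n. - 2 * s * ((y t - w t) * (w t - q t)) + s\<^sup>2 * (d t)\<^sup>2)"
        by (rule sum.cong) (auto simp: v_def d_def power2_eq_square algebra_simps)
      also have "\<dots> = - 2 * s * X + s\<^sup>2 * D"
        unfolding X_def D_def by (simp only: sum.distrib sum_distrib_left[symmetric])
      finally show ?thesis .
    qed
    have tv: "tvn n v \<le> (1 + s) * tvn n w - s * tvn n q"
    proof -
      have "tvn n v \<le> (\<Sum>t=2..n. (1 + s) * \<bar>w t - w (t - 1)\<bar> - s * \<bar>q t - q (t - 1)\<bar>)"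
        unfolding tvn_def
      proof (rule sum_mono)
        fix t assume t: "t \<in> {2..n}"
        have e: "v t - v (t - 1) = (1 + s) * (w t - w (t - 1)) - s * (q t - q (t - 1))"
        proof -
          have "t \<in> {1..n}" "t - 1 \<in> {1..n}" using t by auto
          hence "d t = w t - q t" "d (t - 1) = w (t - 1) - q (t - 1)" unfolding d_def by simp_all
          thus ?thesis unfolding v_def by (simp only:) (simp add: algebra_simps)
        qed
        show "\<bar>v t - v (t - 1)\<bar> \<le> (1 + s) * \<bar>w t - w (t - 1)\<bar> - s * \<bar>q t - q (t - 1)\<bar>"
        proof (cases "q t = q (t - 1)")
          case True
          then show ?thesis unfolding e using s by (simp add: abs_mult)
        next
          case False
          hence tI: "t \<in> I2" using t unfolding I2_def by simp
          hence "\<bar>w t - w (t - 1)\<bar> / \<bar>q t - q (t - 1)\<bar> \<in> A" unfolding A_def by blast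
          hence "s \<le> \<bar>w t - w (t - 1)\<bar> / \<bar>q t - q (t - 1)\<bar>" using s0A s by fastforce
          hence "s * \<bar>q t - q (t - 1)\<bar> \<le> \<bar>w t - w (t - 1)\<bar>" using False by (simp add: field_simps)
          moreover have "(w t - w (t - 1)) * (q t - q (t - 1)) > 0" using qc[OF t False] by (simp add: mult.commute)
          ultimately show ?thesis unfolding e using edge_ineq s by auto
        qed
      qed
      also have "\<dots> = (1 + s) * tvn n w - s * tvn n q"
        unfolding tvn_def by (simp add: sum_subtractf sum_distrib_left)
      finally show ?thesis .
    qed
    have "0 \<le> Phi y n lam v - Phi y n lam w" using le by simp
    also have "\<dots> = (sqerr y n v - sqerr y n w) + lam * (tvn n v - tvn n w)"
      unfolding Phi_def by (simp add: algebra_simps)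
    also have "lam * (tvn n v - tvn n w) \<le> lam * (s * (tvn n w - tvn n q))"
      using tv lam by (intro mult_left_mono) (auto simp: algebra_simps)
    finally have "0 \<le> - 2 * s * X + s\<^sup>2 * D + s * K" using sq unfolding K_def by (simp add: algebra_simps)
    hence "0 \<le> s * (- 2 * X + s * D + K)" by (simp add: algebra_simps power2_eq_square)
    hence "0 \<le> - 2 * X + s * D + K" using s by (simp add: zero_le_mult_iff)
    thus ?thesis by simp
  qed
  have Dnn: "D \<ge> 0" unfolding D_def by (simp add: sum_nonneg)
  have "2 * X \<le> K"
  proof (rule ccontr)
    assume "\<not> 2 * X \<le> K"
    hence g: "2 * X - K > 0" by simp
    define s where "s = min s0 ((2 * X - K) / (2 * (D + 1)))"
    have sp: "0 < s" "s \<le> s0" unfolding s_def using s0pos g Dnn by auto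
    have "s * D \<le> (2 * X - K) / (2 * (D + 1)) * D" unfolding s_def using Dnn by (intro mult_right_mono) auto
    also have "\<dots> < 2 * X - K"
    proof -
      have m: "(D+2)*K < (D+2)*(2*X)" using g Dnn by (intro mult_strict_left_mono) auto
      have e: "(D+2)*K = D*K + K*2" "(D+2)*(2*X) = X*4 + D*(X*2)" by (simp_all add: algebra_simps)
      show ?thesis using Dnn by (simp add: field_simps) (use m e in linarith)
    qed
    finally show False using main[OF sp] by simp
  qed
  thus ?thesis unfolding X_def K_def q_def by simp
qed


lemma Lc_nonneg: "1 \<le> n \<Longrightarrow> 0 \<le> Lc G B n"
  unfolding Lc_def by (intro add_nonneg_nonneg mult_nonneg_nonneg) auto

lemma core:
  assumes n1: "1 \<le> n" and yb: "\<forall>t\<in>{1..n}. \<bar>y t\<bar> \<le> G" and B1: "1 \<le> B" "B \<le> G"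
    and x0b: "\<bar>x0\<bar> \<le> B" and C0: "0 \<le> C" and wT: "w \<in> TV B n C" and h: "0 < h" "h \<le> 1"
  shows "(\<Sum>t=1..n. (y t - flh_ogd G B x0 y t)\<^sup>2 - (y t - w t)\<^sup>2)
           \<le> 2 * Lc G B n + real n * h\<^sup>2 + 2 * Lc G B n * C / h"
proof -
  define L where "L = Lc G B n"
  have L0: "0 \<le> L" unfolding L_def using Lc_nonneg[OF n1] .
  define lam where "lam = 2 * L / h"
  have lam0: "0 \<le> lam" unfolding lam_def using L0 h by simp
  have lamh: "lam * h = 2 * L" unfolding lam_def using h by simp
  obtain wo where woS: "wo \<in> boxS B n" and womin: "\<forall>v\<in>boxS B n. Phi y n lam wo \<le> Phi y n lam v"
    using minimizer_exists[of B n y lam] B1 by auto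
  have wb: "\<forall>t\<in>{1..n}. \<bar>w t\<bar> \<le> B" and tvw: "tvn n w \<le> C"
    using wT unfolding TV_def tvn_def by auto
  define w2 where "w2 t = (if t \<in> {1..n} then w t else 0)" for t
  have w2S: "w2 \<in> boxS B n" unfolding boxS_iff w2_def using wb by auto
  have "sqerr y n w2 = sqerr y n w" unfolding sqerr_def w2_def by (rule sum.cong) auto
  moreover have "tvn n w2 = tvn n w" unfolding tvn_def w2_def by (rule sum.cong) auto
  ultimately have F5: "sqerr y n wo - sqerr y n w \<le> lam * C - lam * tvn n wo"
    using womin w2S tvw lam0 unfolding Phi_def
    by (smt (verit, best) mult_left_mono)
  have wob: "\<forall>t\<in>{1..n}. \<bar>wo t\<bar> \<le> B" using woS by (auto simp: boxS_iff)
  have h2: "h < 2 * B" using h B1 by simp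
  define q where "q = qz B h wo"
  have qb: "\<forall>t\<in>{1..n}. \<bar>q t\<bar> \<le> B" using qz_inv[OF h(1) wob] unfolding q_def by auto
  have qd: "\<bar>wo t - q t\<bar> \<le> h" if "t \<in> {1..n}" for t using qz_inv[OF h(1) wob] that unfolding q_def by auto
  have F1: "(\<Sum>t=1..n. (y t - flh_ogd G B x0 y t)\<^sup>2 - (y t - q t)\<^sup>2) \<le> L * (1 + chg q n)"
    unfolding L_def by (rule block_regret[OF n1 yb _ x0b _ qb]) (use B1 in auto)
  have chg_eq: "chg q n = nsm h q n + nbg h q n"
    unfolding chg_def nsm_def nbg_def sum.distrib[symmetric] by (rule sum.cong) (use h in auto)
  have cnt: "nsm h q n - nbg h q n \<le> 1"
  proof -
    have "nsm h q n - nbg h q n \<le> isb B (q n) - isb B (q 1)"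
      using qz_count[OF h(1) h2 wob _ order_refl] n1 unfolding q_def by simp
    moreover have "isb B (q n) \<le> 1" "0 \<le> isb B (q 1)" by (auto simp: isb_def)
    ultimately show ?thesis by simp
  qed
  have nbg0: "0 \<le> nbg h q n" unfolding nbg_def by (rule sum_nonneg) auto
  have tvq: "h * nbg h q n \<le> tvn n q"
    unfolding nbg_def tvn_def sum_distrib_left by (rule sum_mono) (use h in auto)
  have F2: "L * chg q n \<le> 2 * (L * nbg h q n) + L"
  proof -
    have "chg q n \<le> 2 * nbg h q n + 1" using chg_eq cnt by simp
    hence "L * chg q n \<le> L * (2 * nbg h q n + 1)" using L0 by (simp add: mult_left_mono)
    thus ?thesis by (simp add: algebra_simps)
  qed
  have F3: "2 * (L * nbg h q n) \<le> lam * tvn n q"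
  proof -
    have "lam * (h * nbg h q n) \<le> lam * tvn n q" using tvq lam0 by (rule mult_left_mono)
    moreover have "lam * (h * nbg h q n) = 2 * (L * nbg h q n)" using lamh by (simp add: algebra_simps)
    ultimately show ?thesis by simp
  qed
  have dk: "2 * (\<Sum>t=1..n. (y t - wo t) * (wo t - q t)) \<le> lam * (tvn n wo - tvn n q)"
    using deriv_key[OF woS womin h(1) h2 lam0] unfolding q_def .
  have F4: "sqerr y n q - sqerr y n wo \<le> real n * h\<^sup>2 + lam * tvn n wo - lam * tvn n q"
  proof -
    have "sqerr y n q - sqerr y n wo = (\<Sum>t=1..n. (wo t - q t)\<^sup>2 + 2 * ((y t - wo t) * (wo t - q t)))"
      unfolding sqerr_def by (subst sum_subtractf[symmetric]) (rule sum.cong, auto simp: power2_eq_square algebra_simps)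
    also have "\<dots> = (\<Sum>t=1..n. (wo t - q t)\<^sup>2) + 2 * (\<Sum>t=1..n. (y t - wo t) * (wo t - q t))"
      by (simp add: sum.distrib sum_distrib_left)
    also have "(\<Sum>t=1..n. (wo t - q t)\<^sup>2) \<le> (\<Sum>t=1..n. h\<^sup>2)"
    proof (rule sum_mono)
      fix t assume "t \<in> {1..n}"
      hence "\<bar>wo t - q t\<bar> \<le> h" by (rule qd)
      thus "(wo t - q t)\<^sup>2 \<le> h\<^sup>2" by (metis abs_ge_zero power2_abs power_mono)
    qed
    also have "(\<Sum>t=1..n. h\<^sup>2) = real n * h\<^sup>2" by simp
    finally show ?thesis using dk by (simp add: algebra_simps)
  qed
  have split: "(\<Sum>t=1..n. (y t - flh_ogd G B x0 y t)\<^sup>2 - (y t - w t)\<^sup>2)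
     = (\<Sum>t=1..n. (y t - flh_ogd G B x0 y t)\<^sup>2 - (y t - q t)\<^sup>2) + (sqerr y n q - sqerr y n wo) + (sqerr y n wo - sqerr y n w)"
    unfolding sqerr_def by (simp add: sum_subtractf)
  have lamC: "lam * C = 2 * L * C / h" unfolding lam_def by simp
  show ?thesis using split F1 F2 F3 F4 F5 lamC unfolding L_def[symmetric] by (simp add: algebra_simps)
qed


lemma cube_root: "0 < x \<Longrightarrow> (x powr (1/3)) ^ 3 = (x::real)"
proof -
  assume x: "0 < x"
  have "(x powr (1/3)) ^ 3 = (x powr (1/3)) powr (real 3)" using x by (simp add: powr_realpow)
  also have "\<dots> = x powr 1" by (simp add: powr_powr)
  finally show ?thesis using x by simp
qed

lemma sq_root3: "0 < x \<Longrightarrow> (x powr (1/3)) ^ 2 = (x::real) powr (2/3)"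
proof -
  assume x: "0 < x"
  have "(x powr (1/3)) ^ 2 = x powr (1/3) * x powr (1/3)" by (simp add: power2_eq_square)
  also have "\<dots> = x powr (1/3 + 1/3)" by (rule powr_add[symmetric])
  also have "(1/3 + 1/3 :: real) = 2/3" by simp
  finally show ?thesis .
qed

lemma Lc_bound:
  assumes "3 \<le> n"
  shows "Lc G B n \<le> 6 * (G + B)\<^sup>2 * ln (real n)" "1 \<le> ln (real n)"
proof -
  have n3: "(3::real) \<le> real n" using assms by simp
  have "1 = ln (exp (1::real))" by (rule ln_exp[symmetric])
  also have "\<dots> \<le> ln 3" using exp_le by (subst ln_le_cancel_iff) auto
  also have "\<dots> \<le> ln (real n)" using n3 by (subst ln_le_cancel_iff) auto
  finally show l1: "1 \<le> ln (real n)" .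
  have "3 * real n \<le> real n * real n" using n3 by (intro mult_right_mono) auto
  hence "real n + 1 \<le> real n * real n" using n3 by linarith
  hence "ln (real n + 1) \<le> ln (real n * real n)" using n3 by (subst ln_le_cancel_iff) auto
  also have "\<dots> = 2 * ln (real n)" using n3 by (simp add: ln_mult)
  finally have "ln (real n + 1) \<le> 2 * ln (real n)" .
  hence "2 * (G + B)\<^sup>2 * ln (real n + 1) \<le> 2 * (G + B)\<^sup>2 * (2 * ln (real n))" by (intro mult_left_mono) simp_all
  moreover have "(G + B)\<^sup>2 * (ln (real n) + 1) \<le> (G + B)\<^sup>2 * (2 * ln (real n))" using l1 by (simp add: mult_left_mono)
  ultimately show "Lc G B n \<le> 6 * (G + B)\<^sup>2 * ln (real n)" unfolding Lc_def by (simp add: algebra_simps)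
qed

lemma regret_R:
  assumes n3: "3 \<le> n" and yb: "\<forall>t\<in>{1..n}. \<bar>y t\<bar> \<le> G" and B1: "1 \<le> B" "B \<le> G"
    and x0b: "\<bar>x0\<bar> \<le> B" and C0: "0 \<le> C" and wT: "w \<in> TV B n C"
  shows "(\<Sum>t=1..n. (y t - flh_ogd G B x0 y t)\<^sup>2 - (y t - w t)\<^sup>2)
          \<le> (1 + 4 * Lc G B n) * max (real n powr (1/3) * C powr (2/3)) 1"
proof -
  define R where "R = max (real n powr (1/3) * C powr (2/3)) 1"
  define L where "L = Lc G B n"
  have n1: "1 \<le> n" using n3 by simp
  have L0: "0 \<le> L" unfolding L_def by (rule Lc_nonneg[OF n1])
  have R1: "1 \<le> R" unfolding R_def by simp
  have RM: "real n powr (1/3) * C powr (2/3) \<le> R" unfolding R_def by simp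
  have np: "0 < real n" using n1 by simp
  show ?thesis
  proof (cases "real n \<le> C")
    case True
    have "(\<Sum>t=1..n. (y t - flh_ogd G B x0 y t)\<^sup>2 - (y t - w t)\<^sup>2) \<le> (\<Sum>t=1..n. (G + B)\<^sup>2)"
    proof (rule sum_mono)
      fix t assume t: "t \<in> {1..n}"
      have "\<bar>flh_ogd G B x0 y t\<bar> \<le> B" unfolding flh_ogd_def by (rule flh_pred_bound) (use t x0b B1 in auto)
      moreover have "\<bar>y t\<bar> \<le> G" using yb t by blast
      ultimately have "\<bar>y t - flh_ogd G B x0 y t\<bar> \<le> G + B"
        using abs_triangle_ineq4[of "y t" "flh_ogd G B x0 y t"] by linarith
      hence "(y t - flh_ogd G B x0 y t)\<^sup>2 \<le> (G + B)\<^sup>2" by (metis abs_ge_zero power2_abs power_mono)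
      moreover have "0 \<le> (y t - w t)\<^sup>2" by simp
      ultimately show "(y t - flh_ogd G B x0 y t)\<^sup>2 - (y t - w t)\<^sup>2 \<le> (G + B)\<^sup>2" by linarith
    qed
    also have "\<dots> = (G + B)\<^sup>2 * real n" by simp
    also have "real n \<le> R"
    proof -
      have "real n = real n powr 1" using np by simp
      also have "\<dots> = real n powr (1/3) * real n powr (2/3)" by (simp add: powr_add[symmetric])
      also have "\<dots> \<le> real n powr (1/3) * C powr (2/3)"
        using True np by (intro mult_left_mono powr_mono2) auto
      finally show ?thesis using RM by simp
    qed
    hence "(G + B)\<^sup>2 * real n \<le> (G + B)\<^sup>2 * R" by (simp add: mult_left_mono)
    also have "(G + B)\<^sup>2 \<le> 1 + 4 * L"
    proof -
      have "ln (real n) \<ge> 1" using Lc_bound[OF n3] by simp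
      have "Lc G B n \<ge> (G + B)\<^sup>2 * (ln (real n) + 1)" unfolding Lc_def
        using n1 by (simp add: mult_nonneg_nonneg)
      moreover have "(G + B)\<^sup>2 * (ln (real n) + 1) \<ge> (G + B)\<^sup>2"
        using mult_left_mono[of 1 "ln (real n) + 1" "(G + B)\<^sup>2"] \<open>ln (real n) \<ge> 1\<close> by simp
      ultimately show ?thesis using L0 unfolding L_def by linarith
    qed
    hence "(G + B)\<^sup>2 * R \<le> (1 + 4 * L) * R" using R1 by (simp add: mult_right_mono)
    finally show ?thesis unfolding R_def L_def by simp
  next
    case False
    define C' where "C' = max C (1 / real n)"
    have C'p: "0 < C'" unfolding C'_def using np by (simp add: less_max_iff_disj)
    have n1r: "1 \<le> real n" using n3 by simp
    have "1 \<le> real n * real n" using mult_mono[OF n1r n1r] by simp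
    hence "1 / real n \<le> real n" using np by (simp add: field_simps)
    hence C'n: "C' \<le> real n" unfolding C'_def using False by simp
    define a where "a = real n powr (1/3)"
    define b where "b = C' powr (1/3)"
    have ap: "0 < a" "1 \<le> a" unfolding a_def using np n1r ge_one_powr_ge_zero[of "real n" "1/3"] by auto
    have bp: "0 < b" unfolding b_def using C'p by simp
    have a3: "a ^ 3 = real n" unfolding a_def by (rule cube_root[OF np])
    have b3: "b ^ 3 = C'" unfolding b_def by (rule cube_root[OF C'p])
    define h where "h = b / a"
    have hdef: "h = (C' / real n) powr (1/3)" unfolding h_def a_def b_def by (simp add: powr_divide)
    have hp: "0 < h" unfolding h_def using ap bp by simp
    have ba: "b \<le> a"
    proof (rule ccontr)
      assume "\<not> b \<le> a"
      hence "a ^ 3 < b ^ 3" using ap by (intro power_strict_mono) auto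
      thus False using a3 b3 C'n by simp
    qed
    have h1: "h \<le> 1" unfolding h_def using ba ap by simp
    have core': "(\<Sum>t=1..n. (y t - flh_ogd G B x0 y t)\<^sup>2 - (y t - w t)\<^sup>2) \<le> 2 * L + real n * h\<^sup>2 + 2 * L * (C / h)"
      using core[OF n1 yb B1 x0b C0 wT hp h1] unfolding L_def by simp
    have M: "a * b\<^sup>2 \<le> R"
    proof (cases "C \<ge> 1 / real n")
      case True
      hence "C' = C" unfolding C'_def by simp
      hence "b\<^sup>2 = C powr (2/3)" unfolding b_def using C'p by (simp add: sq_root3)
      thus ?thesis using RM unfolding a_def by simp
    next
      case False
      hence "C' = 1 / real n" unfolding C'_def by simp
      hence "(a * b) ^ 3 = 1" using a3 b3 np by (simp add: power_mult_distrib)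
      hence "(a * b) ^ 3 = 1 ^ 3" by simp
      hence ab: "a * b = 1" using ap bp by (intro power_eq_imp_eq_base[of "a * b" 3 1]) auto
      have "a * b\<^sup>2 = (a * b) * b" by (simp add: power2_eq_square)
      also have "\<dots> = b" using ab by simp
      also have "b \<le> 1"
      proof -
        have "1 * b \<le> a * b" using ap bp by (intro mult_right_mono) auto
        thus ?thesis using ab by simp
      qed
      finally show ?thesis using R1 by simp
    qed
    have nh: "real n * h\<^sup>2 = a * b\<^sup>2"
      unfolding h_def a3[symmetric] using ap by (simp add: power2_eq_square field_simps power3_eq_cube)
    have Ch: "C / h \<le> a * b\<^sup>2"
    proof -
      have "C \<le> C'" unfolding C'_def by simp
      hence "C / h \<le> C' / h" using hp by (simp add: divide_right_mono)
      also have "C' / h = a * b\<^sup>2" unfolding h_def b3[symmetric] using ap bp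
        by (simp add: power2_eq_square field_simps power3_eq_cube)
      finally show ?thesis .
    qed
    have "2 * L * (C / h) \<le> 2 * L * R" using Ch M L0 by (intro mult_left_mono) auto
    moreover have "2 * L \<le> 2 * L * R" using R1 L0 by (simp add: mult_le_cancel_left1)
    ultimately have "(\<Sum>t=1..n. (y t - flh_ogd G B x0 y t)\<^sup>2 - (y t - w t)\<^sup>2) \<le> 2 * L * R + R + 2 * L * R"
      using core' nh M by linarith
    also have "\<dots> = (1 + 4 * L) * R" by (simp add: algebra_simps)
    finally show ?thesis unfolding R_def L_def .
  qed
qed

theorem theorem1:
  shows "\<exists>p::real. p \<ge> 0 \<and>
    (\<forall>B G :: real. 1 \<le> B \<and> B \<le> G \<longrightarrow>
      (\<exists>c::real. c > 0 \<and>
        (\<forall>(n::nat) (x0::real) (y::nat \<Rightarrow> real) (C::real) (w::nat \<Rightarrow> real).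
           n \<ge> 3 \<and> x0 \<in> {-B..B} \<and> (\<forall>t\<in>{1..n}. \<bar>y t\<bar> \<le> G) \<and> C \<ge> 0 \<and> w \<in> TV B n C
           \<longrightarrow> (\<Sum>t = 1..n. (y t - flh_ogd G B x0 y t)\<^sup>2 - (y t - w t)\<^sup>2)
                 \<le> c * ln (real n) powr p * max (real n powr (1/3) * C powr (2/3)) 1)))"
proof (rule exI[of _ 1], intro conjI allI impI)
  show "(0::real) \<le> 1" by simp
  fix B G :: real
  assume BG: "1 \<le> B \<and> B \<le> G"
  show "\<exists>c>0. \<forall>n x0 y C w. 3 \<le> n \<and> x0 \<in> {- B..B} \<and> (\<forall>t\<in>{1..n}. \<bar>y t\<bar> \<le> G) \<and> 0 \<le> C \<and> w \<in> TV B n C \<longrightarrow>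
      (\<Sum>t = 1..n. (y t - flh_ogd G B x0 y t)\<^sup>2 - (y t - w t)\<^sup>2)
        \<le> c * ln (real n) powr 1 * max (real n powr (1 / 3) * C powr (2 / 3)) 1"
  proof (rule exI[of _ "1 + 24 * (G + B)\<^sup>2"], intro conjI allI impI)
    show "0 < 1 + 24 * (G + B)\<^sup>2" by (simp add: add_pos_nonneg)
    fix n x0 y C w
    assume A: "3 \<le> n \<and> x0 \<in> {- B..B} \<and> (\<forall>t\<in>{1..n}. \<bar>y t\<bar> \<le> G) \<and> 0 \<le> C \<and> w \<in> TV B n C"
    define R where "R = max (real n powr (1 / 3) * C powr (2 / 3)) 1"
    have R1: "1 \<le> R" unfolding R_def by simp
    have n3: "3 \<le> n" using A by simp
    have x0b: "\<bar>x0\<bar> \<le> B" using A by auto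
    have reg: "(\<Sum>t = 1..n. (y t - flh_ogd G B x0 y t)\<^sup>2 - (y t - w t)\<^sup>2) \<le> (1 + 4 * Lc G B n) * R"
      unfolding R_def by (rule regret_R) (use A BG x0b in auto)
    have l1: "1 \<le> ln (real n)" and Lb: "Lc G B n \<le> 6 * (G + B)\<^sup>2 * ln (real n)" using Lc_bound[OF n3] by auto
    have "1 + 4 * Lc G B n \<le> ln (real n) + 24 * (G + B)\<^sup>2 * ln (real n)" using l1 Lb by simp
    also have "\<dots> = (1 + 24 * (G + B)\<^sup>2) * ln (real n)" by (simp add: algebra_simps)
    finally have "(1 + 4 * Lc G B n) * R \<le> (1 + 24 * (G + B)\<^sup>2) * ln (real n) * R"
      using R1 by (simp add: mult_right_mono)
    moreover have "ln (real n) powr 1 = ln (real n)" using l1 by simp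
    ultimately show "(\<Sum>t = 1..n. (y t - flh_ogd G B x0 y t)\<^sup>2 - (y t - w t)\<^sup>2)
        \<le> (1 + 24 * (G + B)\<^sup>2) * ln (real n) powr 1 * max (real n powr (1 / 3) * C powr (2 / 3)) 1"
      using reg unfolding R_def by simp
  qed
qed

end
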